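(* Let $M^2$ be a surface in $\mathbb{R}^4$ free of flat points. Then the tangent indicatrix $\chi$ is a rectangular hyperbola (a Lorentz circle) at each point if and only if the ellipse of normal curvature at each point is a line segment which is not collinear with the mean curvature vector field $H$.
   Context: Let $M^2: z=z(u,v)$ be a regular surface in $\mathbb{R}^4$ with first fundamental form $I=E\,du^2+2F\,du\,dv+G\,dv^2$, $W=\sqrt{EG-F^2}$, second fundamental form $\sigma$, and mean curvature vector $H=\frac12(\sigma(x,x)+\sigma(y,y))$ ($\{x,y\}$ any orthonormal tangent basis). Choose an orthonormal normal frame $\{e_1,e_2\}$ with $\{z_u,z_v,e_1,e_2\}$ positively oriented, write $\sigma(z_u,z_u)=c_{11}^1e_1+c_{11}^2e_2$, $\sigma(z_u,z_v)=c_{12}^1e_1+c_{12}^2e_2$, $\sigma(z_v,z_v)=c_{22}^1e_1+c_{22}^2e_2$, and set $L=\frac{2}{W}(c_{11}^1c_{12}^2-c_{12}^1c_{11}^2)$, $M=\frac{1}{W}(c_{11}^1c_{22}^2-c_{22}^1c_{11}^2)$, $N=\frac{2}{W}(c_{12}^1c_{22}^2-c_{22}^1c_{12}^2)$. A point is flat if $L=M=N=0$; "free of flat points" means $(L,M,N)\ne(0,0,0)$ everywhere. The principal normal curvatures $\nu',\nu''$ at a point are the roots of $(EG-F^2)\nu^2-(EN+GL-2FM)\nu+(LN-M^2)=0$, with corresponding $I$-orthogonal principal directions; the tangent indicatrix $\chi$ is the conic $\nu'X^2+\nu''Y^2=\varepsilon$ ($\varepsilon=\pm1$) in Cartesian coordinates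 of $T_pM^2$ w.r.t. an orthonormal basis of principal directions; it is a rectangular hyperbola iff $\nu''=-\nu'\neq0$. The ellipse of normal curvature at $p$ is $\{\sigma(v,v): v\in T_pM^2, |v|=1\}$, centered at $H(p)$; "not collinear with $H$" means the segment's direction is not parallel to $H(p)$. *)

theory Defs
  imports "HOL-Analysis.Analysis"
begin

text \<open>A surface patch z : U \<subseteq> R^2 \<rightarrow> R^4, parameters (u,v) = (p$1, p$2).\<close>

definition zu :: "(real^2 \<Rightarrow> real^4) \<Rightarrow> real^2 \<Rightarrow> real^4" where
  "zu z p = frechet_derivative z (at p) (axis 1 1)"
definition zv :: "(real^2 \<Rightarrow> real^4) \<Rightarrow> real^2 \<Rightarrow> real^4" where
  "zv z p = frechet_derivative z (at p) (axis 2 1)"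
definition zuu :: "(real^2 \<Rightarrow> real^4) \<Rightarrow> real^2 \<Rightarrow> real^4" where
  "zuu z p = frechet_derivative (zu z) (at p) (axis 1 1)"
definition zuv :: "(real^2 \<Rightarrow> real^4) \<Rightarrow> real^2 \<Rightarrow> real^4" where
  "zuv z p = frechet_derivative (zu z) (at p) (axis 2 1)"
definition zvv :: "(real^2 \<Rightarrow> real^4) \<Rightarrow> real^2 \<Rightarrow> real^4" where
  "zvv z p = frechet_derivative (zv z) (at p) (axis 2 1)"

definition regular_surface :: "(real^2 \<Rightarrow> real^4) \<Rightarrow> (real^2) set \<Rightarrow> bool" where
  "regular_surface z U \<longleftrightarrow> open U \<and>
     (\<forall>p\<in>U. z differentiable (at p) \<and> zu z differentiable (at p) \<and> zv z differentiable (at p)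
        \<and> zu z p \<noteq> zv z p \<and> independent {zu z p, zv z p})"

definition coefE :: "(real^2 \<Rightarrow> real^4) \<Rightarrow> real^2 \<Rightarrow> real" where
  "coefE z p = zu z p \<bullet> zu z p"
definition coefF :: "(real^2 \<Rightarrow> real^4) \<Rightarrow> real^2 \<Rightarrow> real" where
  "coefF z p = zu z p \<bullet> zv z p"
definition coefG :: "(real^2 \<Rightarrow> real^4) \<Rightarrow> real^2 \<Rightarrow> real" where
  "coefG z p = zv z p \<bullet> zv z p"
definition coefW :: "(real^2 \<Rightarrow> real^4) \<Rightarrow> real^2 \<Rightarrow> real" where
  "coefW z p = sqrt (coefE z p * coefG z p - (coefF z p)\<^sup>2)"

definition pos_normal_frame :: "(real^2 \<Rightarrow> real^4) \<Rightarrow> real^2 \<Rightarrow> real^4 \<Rightarrow> real^4 \<Rightarrow> bool" where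
  "pos_normal_frame z p e1 e2 \<longleftrightarrow>
     e1 \<bullet> zu z p = 0 \<and> e1 \<bullet> zv z p = 0 \<and> e2 \<bullet> zu z p = 0 \<and> e2 \<bullet> zv z p = 0 \<and>
     norm e1 = 1 \<and> norm e2 = 1 \<and> e1 \<bullet> e2 = 0 \<and>
     det (vector [zu z p, zv z p, e1, e2] :: real^4^4) > 0"

definition nframe :: "(real^2 \<Rightarrow> real^4) \<Rightarrow> real^2 \<Rightarrow> (real^4) \<times> (real^4)" where
  "nframe z p = (SOME f. pos_normal_frame z p (fst f) (snd f))"
definition ne1 :: "(real^2 \<Rightarrow> real^4) \<Rightarrow> real^2 \<Rightarrow> real^4" where
  "ne1 z p = fst (nframe z p)"
definition ne2 :: "(real^2 \<Rightarrow> real^4) \<Rightarrow> real^2 \<Rightarrow> real^4" where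
  "ne2 z p = snd (nframe z p)"

definition nproj :: "(real^2 \<Rightarrow> real^4) \<Rightarrow> real^2 \<Rightarrow> real^4 \<Rightarrow> real^4" where
  "nproj z p w = (w \<bullet> ne1 z p) *\<^sub>R ne1 z p + (w \<bullet> ne2 z p) *\<^sub>R ne2 z p"

definition sig11 :: "(real^2 \<Rightarrow> real^4) \<Rightarrow> real^2 \<Rightarrow> real^4" where
  "sig11 z p = nproj z p (zuu z p)"
definition sig12 :: "(real^2 \<Rightarrow> real^4) \<Rightarrow> real^2 \<Rightarrow> real^4" where
  "sig12 z p = nproj z p (zuv z p)"
definition sig22 :: "(real^2 \<Rightarrow> real^4) \<Rightarrow> real^2 \<Rightarrow> real^4" where
  "sig22 z p = nproj z p (zvv z p)"

definition cc :: "(real^2 \<Rightarrow> real^4) \<Rightarrow> real^2 \<Rightarrow> nat \<Rightarrow> nat \<Rightarrow> nat \<Rightarrow> real" where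
  "cc z p i j k =
     (let s = (if i = 1 \<and> j = 1 then sig11 z p else if i = 2 \<and> j = 2 then sig22 z p else sig12 z p);
          e = (if k = 1 then ne1 z p else ne2 z p) in s \<bullet> e)"

definition coefL :: "(real^2 \<Rightarrow> real^4) \<Rightarrow> real^2 \<Rightarrow> real" where
  "coefL z p = 2 / coefW z p * (cc z p 1 1 1 * cc z p 1 2 2 - cc z p 1 2 1 * cc z p 1 1 2)"
definition coefM :: "(real^2 \<Rightarrow> real^4) \<Rightarrow> real^2 \<Rightarrow> real" where
  "coefM z p = 1 / coefW z p * (cc z p 1 1 1 * cc z p 2 2 2 - cc z p 2 2 1 * cc z p 1 1 2)"
definition coefN :: "(real^2 \<Rightarrow> real^4) \<Rightarrow> real^2 \<Rightarrow> real" where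
  "coefN z p = 2 / coefW z p * (cc z p 1 2 1 * cc z p 2 2 2 - cc z p 2 2 1 * cc z p 1 2 2)"

definition flat_point :: "(real^2 \<Rightarrow> real^4) \<Rightarrow> real^2 \<Rightarrow> bool" where
  "flat_point z p \<longleftrightarrow> coefL z p = 0 \<and> coefM z p = 0 \<and> coefN z p = 0"

definition tvec :: "(real^2 \<Rightarrow> real^4) \<Rightarrow> real^2 \<Rightarrow> real \<times> real \<Rightarrow> real^4" where
  "tvec z p x = fst x *\<^sub>R zu z p + snd x *\<^sub>R zv z p"

definition sff :: "(real^2 \<Rightarrow> real^4) \<Rightarrow> real^2 \<Rightarrow> real \<times> real \<Rightarrow> real \<times> real \<Rightarrow> real^4" where
  "sff z p x y = (fst x * fst y) *\<^sub>R sig11 z p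
      + (fst x * snd y + snd x * fst y) *\<^sub>R sig12 z p + (snd x * snd y) *\<^sub>R sig22 z p"

definition mean_curv :: "(real^2 \<Rightarrow> real^4) \<Rightarrow> real^2 \<Rightarrow> real^4" where
  "mean_curv z p = (SOME h. \<exists>x y. norm (tvec z p x) = 1 \<and> norm (tvec z p y) = 1 \<and>
        tvec z p x \<bullet> tvec z p y = 0 \<and> h = (1/2) *\<^sub>R (sff z p x x + sff z p y y))"

definition normal_ellipse :: "(real^2 \<Rightarrow> real^4) \<Rightarrow> real^2 \<Rightarrow> (real^4) set" where
  "normal_ellipse z p = {sff z p v v | v. norm (tvec z p v) = 1}"

definition principal_normal_curvatures :: "(real^2 \<Rightarrow> real^4) \<Rightarrow> real^2 \<Rightarrow> real \<Rightarrow> real \<Rightarrow> bool" where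
  "principal_normal_curvatures z p nu1 nu2 \<longleftrightarrow>
     (\<forall>x::real. (coefE z p * coefG z p - (coefF z p)\<^sup>2) * x\<^sup>2
        - (coefE z p * coefN z p + coefG z p * coefL z p - 2 * coefF z p * coefM z p) * x
        + (coefL z p * coefN z p - (coefM z p)\<^sup>2)
      = (coefE z p * coefG z p - (coefF z p)\<^sup>2) * (x - nu1) * (x - nu2))"

text \<open>Tangent indicatrix nu' X^2 + nu'' Y^2 = eps is a rectangular hyperbola iff nu'' = -nu' \<noteq> 0.\<close>
definition indicatrix_rect_hyperbola :: "(real^2 \<Rightarrow> real^4) \<Rightarrow> real^2 \<Rightarrow> bool" where
  "indicatrix_rect_hyperbola z p \<longleftrightarrow>
     (\<exists>nu1 nu2. principal_normal_curvatures z p nu1 nu2 \<and> nu2 = - nu1 \<and> nu1 \<noteq> 0)"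

definition ellipse_segment_not_collinear_H :: "(real^2 \<Rightarrow> real^4) \<Rightarrow> real^2 \<Rightarrow> bool" where
  "ellipse_segment_not_collinear_H z p \<longleftrightarrow>
     (\<exists>A B. A \<noteq> B \<and> normal_ellipse z p = closed_segment A B \<and>
        \<not> (\<exists>c. mean_curv z p = c *\<^sub>R (B - A)))"

end

theory Submission
  imports Defs
begin


lemma vector4_nth:
  "(vector [a,b,c,d] :: ('a::zero)^4) $ 1 = a"
  "(vector [a,b,c,d] :: ('a::zero)^4) $ 2 = b"
  "(vector [a,b,c,d] :: ('a::zero)^4) $ 3 = c"
  "(vector [a,b,c,d] :: ('a::zero)^4) $ 4 = d"
  unfolding vector_def by simp_all

lemma UNIV_4: "(UNIV :: 4 set) = {1,2,3,4}"
  using exhaust_4 by blast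

lemma sum_UNIV_4: "(\<Sum>i\<in>(UNIV::4 set). f i) = f 1 + f 2 + f 3 + f 4"
  unfolding UNIV_4 by (simp add: add.assoc)

lemma lin2_zero: fixes a b c1 c2 d :: real assumes "c1*a+c2*b = 0" "c1*b+c2*d=0" shows "c1*(a*d-b^2) = 0" "c2*(a*d-b^2) = 0"
proof -
  have "c1*(a*d-b^2) = d*(c1*a+c2*b) - b*(c1*b+c2*d)" by (simp add: algebra_simps power2_eq_square)
  then show "c1*(a*d-b^2) = 0" using assms by simp
  have "c2*(a*d-b^2) = a*(c1*b+c2*d) - b*(c1*a+c2*b)" by (simp add: algebra_simps power2_eq_square)
  then show "c2*(a*d-b^2) = 0" using assms by simp
qed

lemma det4_nz:
  fixes u v e1 e2 :: "real^4"
  assumes D: "(u\<bullet>u) * (v\<bullet>v) - (u\<bullet>v)^2 > 0"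
    and o: "e1\<bullet>u = 0" "e1\<bullet>v = 0" "e2\<bullet>u = 0" "e2\<bullet>v = 0" "e1\<bullet>e1 = 1" "e2\<bullet>e2 = 1" "e1\<bullet>e2 = 0"
  shows "det (vector [u,v,e1,e2] :: real^4^4) \<noteq> 0"
proof -
  let ?A = "vector [u,v,e1,e2] :: real^4^4"
  have "\<forall>c. sum (\<lambda>i::4. c i *s row i ?A) UNIV = 0 \<longrightarrow> (\<forall>i. c i = 0)"
  proof (rule allI, rule impI)
    fix c :: "4 \<Rightarrow> real"
    assume "sum (\<lambda>i::4. c i *s row i ?A) UNIV = 0"
    then have z: "c 1 *\<^sub>R u + c 2 *\<^sub>R v + c 3 *\<^sub>R e1 + c 4 *\<^sub>R e2 = 0"
      unfolding sum_UNIV_4 by (simp add: row_def vector4_nth scalar_mult_eq_scaleR)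
    have i1: "(c 1 *\<^sub>R u + c 2 *\<^sub>R v + c 3 *\<^sub>R e1 + c 4 *\<^sub>R e2) \<bullet> e1 = 0" using z by simp
    have i2: "(c 1 *\<^sub>R u + c 2 *\<^sub>R v + c 3 *\<^sub>R e1 + c 4 *\<^sub>R e2) \<bullet> e2 = 0" using z by simp
    have i3: "(c 1 *\<^sub>R u + c 2 *\<^sub>R v + c 3 *\<^sub>R e1 + c 4 *\<^sub>R e2) \<bullet> u = 0" using z by simp
    have i4: "(c 1 *\<^sub>R u + c 2 *\<^sub>R v + c 3 *\<^sub>R e1 + c 4 *\<^sub>R e2) \<bullet> v = 0" using z by simp
    have o': "u\<bullet>e1 = 0" "v\<bullet>e1 = 0" "u\<bullet>e2 = 0" "v\<bullet>e2 = 0" "e2\<bullet>e1 = 0" "v\<bullet>u = u\<bullet>v"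
      using o by (simp_all add: inner_commute)
    have c3: "c 3 = 0" using i1 o o' by (simp add: inner_add_left)
    have c4: "c 4 = 0" using i2 o o' by (simp add: inner_add_left)
    have a: "c 1 * (u\<bullet>u) + c 2 * (u\<bullet>v) = 0" using i3 o o' c3 c4 by (simp add: inner_add_left)
    have b: "c 1 * (u\<bullet>v) + c 2 * (v\<bullet>v) = 0" using i4 o o' c3 c4 by (simp add: inner_add_left)
    have "c 1 * ((u\<bullet>u) * (v\<bullet>v) - (u\<bullet>v)^2) = 0"
      using lin2_zero[OF a b] by simp
    then have c1: "c 1 = 0" using D by simp
    have "c 2 * ((u\<bullet>u) * (v\<bullet>v) - (u\<bullet>v)^2) = 0"
      using lin2_zero[OF a b] by simp
    then have c2: "c 2 = 0" using D by simp
    show "\<forall>i. c i = 0" using c1 c2 c3 c4 exhaust_4 by metis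
  qed
  then obtain B where "?A ** B = mat 1"
    using matrix_right_invertible_independent_rows by blast
  then have "invertible ?A"
    using matrix_left_right_inverse invertible_def by blast
  then show ?thesis using invertible_det_nz by blast
qed

lemma det4_flip:
  fixes u v e1 e2 :: "real^4"
  shows "det (vector [u,v,e1,-e2] :: real^4^4) = - det (vector [u,v,e1,e2] :: real^4^4)"
proof -
  let ?A = "vector [u,v,e1,e2] :: real^4^4"
  have eq: "(vector [u,v,e1,-e2] :: real^4^4) = (\<chi> i. if i = 4 then (-1) *s (?A$i) else ?A$i)"
    by (simp add: vec_eq_iff forall_4 vector4_nth scalar_mult_eq_scaleR)
  have "det (\<chi> i. if i = 4 then (-1::real) *s (?A$i) else ?A$i) = (-1) * det (\<chi> i. if i = 4 then ?A$i else ?A$i)"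
    by (rule det_row_mul)
  then show ?thesis using eq by (simp add: vec_lambda_eta)
qed

lemma frame_exists:
  fixes u v :: "real^4"
  assumes D: "(u\<bullet>u) * (v\<bullet>v) - (u\<bullet>v)^2 > 0"
  shows "\<exists>e1 e2. e1 \<bullet> u = 0 \<and> e1 \<bullet> v = 0 \<and> e2 \<bullet> u = 0 \<and> e2 \<bullet> v = 0 \<and>
     norm e1 = 1 \<and> norm e2 = 1 \<and> e1 \<bullet> e2 = 0 \<and>
     det (vector [u, v, e1, e2] :: real^4^4) > 0"
proof -
  have "dim {u,v} \<le> card {u,v}" by (rule dim_le_card') simp
  also have "\<dots> \<le> 2" by (simp add: card_insert_le_m1)
  finally have "dim {u,v} < DIM(real^4)" by simp
  then obtain x1 where x1: "x1 \<noteq> 0" "\<And>y. y \<in> span {u,v} \<Longrightarrow> orthogonal x1 y"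
    using orthogonal_to_subspace_exists by blast
  have "dim {u,v,x1} \<le> card {u,v,x1}" by (rule dim_le_card') simp
  also have "\<dots> \<le> 3" by (simp add: card_insert_le_m1)
  finally have "dim {u,v,x1} < DIM(real^4)" by simp
  then obtain x2 where x2: "x2 \<noteq> 0" "\<And>y. y \<in> span {u,v,x1} \<Longrightarrow> orthogonal x2 y"
    using orthogonal_to_subspace_exists by blast
  define e1 where "e1 = (1 / norm x1) *\<^sub>R x1"
  define e2 where "e2 = (1 / norm x2) *\<^sub>R x2"
  have o1: "x1 \<bullet> u = 0" "x1 \<bullet> v = 0" using x1(2)[of u] x1(2)[of v]
    by (auto simp: orthogonal_def span_base)
  have o2: "x2 \<bullet> u = 0" "x2 \<bullet> v = 0" "x2 \<bullet> x1 = 0" using x2(2)[of u] x2(2)[of v] x2(2)[of x1]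
    by (auto simp: orthogonal_def span_base)
  have n1: "norm e1 = 1" "norm e2 = 1" using x1 x2 by (simp_all add: e1_def e2_def)
  have ee: "e1 \<bullet> e1 = 1" "e2 \<bullet> e2 = 1" using n1 by (simp_all add: norm_eq_1)
  have oe: "e1 \<bullet> u = 0" "e1 \<bullet> v = 0" "e2 \<bullet> u = 0" "e2 \<bullet> v = 0" "e1 \<bullet> e2 = 0"
    using o1 o2 by (simp_all add: e1_def e2_def inner_commute)
  have nz: "det (vector [u, v, e1, e2] :: real^4^4) \<noteq> 0"
    by (rule det4_nz[OF D oe(1-4) ee oe(5)])
  show ?thesis
  proof (cases "det (vector [u, v, e1, e2] :: real^4^4) > 0")
    case True then show ?thesis using oe n1 by (intro exI[of _ e1] exI[of _ e2]) simp
  next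
    case False
    then have "det (vector [u, v, e1, -e2] :: real^4^4) > 0" using nz det4_flip[of u v e1 e2] by simp
    moreover have "(-e2) \<bullet> u = 0" "(-e2) \<bullet> v = 0" "norm (-e2) = 1" "e1 \<bullet> (-e2) = 0" using oe n1 by simp_all
    ultimately show ?thesis using oe n1 by (intro exI[of _ e1] exI[of _ "-e2"]) simp
  qed
qed


definition psi :: "real \<Rightarrow> real \<Rightarrow> real \<Rightarrow> real \<Rightarrow> real \<Rightarrow> real \<times> real" where
 "psi s F W l m = (l / s - m * F / (s * W), m * s / W)"

definition H0f :: "real^4 \<Rightarrow> real^4 \<Rightarrow> real^4 \<Rightarrow> real \<Rightarrow> real \<Rightarrow> real \<Rightarrow> real^4" where
 "H0f s1 s2 s3 E F G = (1 / (2 * (E * G - F^2))) *\<^sub>R (G *\<^sub>R s1 - (2 * F) *\<^sub>R s2 + E *\<^sub>R s3)"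
definition af :: "real^4 \<Rightarrow> real^4 \<Rightarrow> real^4 \<Rightarrow> real \<Rightarrow> real \<Rightarrow> real \<Rightarrow> real^4" where
 "af s1 s2 s3 E F G = (1 / (2 * E * (E * G - F^2))) *\<^sub>R ((E * G - 2 * F^2) *\<^sub>R s1 + (2 * F * E) *\<^sub>R s2 - E^2 *\<^sub>R s3)"
definition bf :: "real^4 \<Rightarrow> real^4 \<Rightarrow> real^4 \<Rightarrow> real \<Rightarrow> real \<Rightarrow> real \<Rightarrow> real^4" where
 "bf s1 s2 s3 E F G = (1 / (E * sqrt (E * G - F^2))) *\<^sub>R (E *\<^sub>R s2 - F *\<^sub>R s1)"

lemma psi_sff:
  fixes s F W l m :: real and s1 s2 s3 :: "real^4"
  assumes "s > 0" "W > 0"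
  defines "x \<equiv> psi s F W l m"
  shows "(fst x * fst x) *\<^sub>R s1 + (fst x * snd x + snd x * fst x) *\<^sub>R s2 + (snd x * snd x) *\<^sub>R s3
    = (l^2 + m^2) *\<^sub>R H0f s1 s2 s3 (s^2) F ((W^2 + F^2)/s^2) + (l^2 - m^2) *\<^sub>R af s1 s2 s3 (s^2) F ((W^2 + F^2)/s^2)
      + (2 * l * m) *\<^sub>R bf s1 s2 s3 (s^2) F ((W^2 + F^2)/s^2)"
proof -
  have D: "s^2 * ((W^2 + F^2)/s^2) - F^2 = W^2" using assms by (simp add: field_simps)
  show ?thesis
    unfolding vec_eq_iff x_def psi_def H0f_def af_def bf_def D using assms
    by (simp add: field_simps power2_eq_square)
qed

lemma psi_inner:
  fixes s F W l m l' m' :: real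
  assumes "s > 0" "W > 0"
  shows "s^2 * fst (psi s F W l m) * fst (psi s F W l' m') + F * (fst (psi s F W l m) * snd (psi s F W l' m') + snd (psi s F W l m) * fst (psi s F W l' m')) + ((W^2 + F^2)/s^2) * snd (psi s F W l m) * snd (psi s F W l' m') = l*l' + m*m'"
  unfolding psi_def using assms by (simp add: field_simps power2_eq_square)

lemma psi_surj:
  fixes s F W :: real and x :: "real \<times> real"
  assumes "s > 0" "W > 0"
  shows "x = psi s F W (s * fst x + F * snd x / s) (W * snd x / s)"
  unfolding psi_def using assms by (simp add: field_simps power2_eq_square prod_eq_iff)

lemma half_angle:
  fixes c t :: real assumes "c^2 + t^2 = 1"
  shows "\<exists>l m. l^2 + m^2 = 1 \<and> l^2 - m^2 = c \<and> 2 * l * m = t"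
proof -
  have c1: "\<bar>c\<bar> \<le> 1" using assms
    by (metis abs_le_square_iff abs_one le_add_same_cancel1 one_power2 zero_le_power2)
  define l where "l = sqrt ((1 + c) / 2)"
  define m where "m = (if t \<ge> 0 then 1 else -1) * sqrt ((1 - c) / 2)"
  have l2: "l^2 = (1 + c)/2" using c1 by (simp add: l_def)
  have m2: "m^2 = (1 - c)/2" using c1 by (simp add: m_def power_mult_distrib)
  have "2 * l * m = (if t \<ge> 0 then 1 else -1) * (2 * sqrt ((1 + c)/2 * ((1 - c)/2)))"
    by (simp add: l_def m_def real_sqrt_mult[symmetric])
  also have "(1 + c)/2 * ((1 - c)/2) = (t/2)^2" using assms by (simp add: field_simps power2_eq_square)
  also have "(if t \<ge> 0 then 1 else -1) * (2 * sqrt ((t/2)^2)) = t" by simp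
  finally have "2 * l * m = t" .
  then show ?thesis using l2 m2 by (intro exI[of _ l] exI[of _ m]) simp
qed


lemma orth_cols:
  fixes l1 m1 l2 m2 :: real
  assumes "l1^2 + m1^2 = 1" "l2^2 + m2^2 = 1" "l1*l2 + m1*m2 = 0"
  shows "l1^2 - m1^2 + (l2^2 - m2^2) = 0" "l1*m1 + l2*m2 = 0"
proof -
  have e1: "l1^2*(l2^2+m2^2) - 2*l1*l2*(l1*l2+m1*m2) + l2^2*(l1^2+m1^2) = (l1*m2 - l2*m1)^2"
    by (simp add: algebra_simps power2_eq_square)
  have e2: "m1^2*(l2^2+m2^2) - 2*m1*m2*(l1*l2+m1*m2) + m2^2*(l1^2+m1^2) = (l1*m2 - l2*m1)^2"
    by (simp add: algebra_simps power2_eq_square)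
  have e3: "l1*m1*(l2^2+m2^2) - (l1*m2+l2*m1)*(l1*l2+m1*m2) + l2*m2*(l1^2+m1^2) = 0"
    by (simp add: algebra_simps power2_eq_square)
  from e1 e2 assms have "l1^2 + l2^2 = m1^2 + m2^2" by simp
  then show "l1^2 - m1^2 + (l2^2 - m2^2) = 0" by simp
  from e3 assms show "l1*m1 + l2*m2 = 0" by simp
qed

lemma tangent_setup:
  fixes u v :: "real^4"
  assumes E: "u \<bullet> u > 0" and D: "(u \<bullet> u) * (v \<bullet> v) - (u \<bullet> v)^2 > 0"
  defines "s \<equiv> sqrt (u \<bullet> u)" and "W \<equiv> sqrt ((u \<bullet> u) * (v \<bullet> v) - (u \<bullet> v)^2)"
  shows "s > 0" "W > 0" "u \<bullet> u = s^2" "v \<bullet> v = (W^2 + (u \<bullet> v)^2) / s^2"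
    "\<And>x y. (fst x *\<^sub>R u + snd x *\<^sub>R v) \<bullet> (fst y *\<^sub>R u + snd y *\<^sub>R v)
       = s^2 * fst x * fst y + (u \<bullet> v) * (fst x * snd y + snd x * fst y) + ((W^2 + (u \<bullet> v)^2) / s^2) * snd x * snd y"
proof -
  show "s > 0" "W > 0" using E D by (simp_all add: s_def W_def)
  show us: "u \<bullet> u = s^2" using E by (simp add: s_def)
  show vs: "v \<bullet> v = (W^2 + (u \<bullet> v)^2) / s^2" using E D by (simp add: s_def W_def field_simps)
  fix x y :: "real \<times> real"
  have "(fst x *\<^sub>R u + snd x *\<^sub>R v) \<bullet> (fst y *\<^sub>R u + snd y *\<^sub>R v)
     = (u \<bullet> u) * fst x * fst y + (u \<bullet> v) * (fst x * snd y + snd x * fst y) + (v \<bullet> v) * snd x * snd y"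
    by (simp add: inner_add_left inner_add_right inner_commute[of v u] algebra_simps)
  then show "(fst x *\<^sub>R u + snd x *\<^sub>R v) \<bullet> (fst y *\<^sub>R u + snd y *\<^sub>R v)
       = s^2 * fst x * fst y + (u \<bullet> v) * (fst x * snd y + snd x * fst y) + ((W^2 + (u \<bullet> v)^2) / s^2) * snd x * snd y"
    by (simp only: us vs)
qed


lemma ell_set:
  fixes u v s1 s2 s3 :: "real^4" and s W F :: real
  assumes sW: "s > 0" "W > 0"
    and inn: "\<And>x y. (fst x *\<^sub>R u + snd x *\<^sub>R v) \<bullet> (fst y *\<^sub>R u + snd y *\<^sub>R v)
       = s^2 * fst x * fst y + F * (fst x * snd y + snd x * fst y) + ((W^2 + F^2) / s^2) * snd x * snd y"
  defines "G \<equiv> (W^2 + F^2) / s^2"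
  shows "{(fst x * fst x) *\<^sub>R s1 + (fst x * snd x + snd x * fst x) *\<^sub>R s2 + (snd x * snd x) *\<^sub>R s3 | x.
            norm (fst x *\<^sub>R u + snd x *\<^sub>R v) = 1}
    = {H0f s1 s2 s3 (s^2) F G + c *\<^sub>R af s1 s2 s3 (s^2) F G + t *\<^sub>R bf s1 s2 s3 (s^2) F G | c t. c^2 + t^2 = 1}"
    (is "?L = ?R")
proof
  have pin: "(fst (psi s F W l m) *\<^sub>R u + snd (psi s F W l m) *\<^sub>R v) \<bullet> (fst (psi s F W l m) *\<^sub>R u + snd (psi s F W l m) *\<^sub>R v) = l^2 + m^2" for l m
    using inn psi_inner[OF sW, of F l m l m] by (simp add: power2_eq_square)
  show "?L \<subseteq> ?R"
  proof
    fix y assume "y \<in> ?L"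
    then obtain x where y: "y = (fst x * fst x) *\<^sub>R s1 + (fst x * snd x + snd x * fst x) *\<^sub>R s2 + (snd x * snd x) *\<^sub>R s3"
      and n: "norm (fst x *\<^sub>R u + snd x *\<^sub>R v) = 1" by blast
    define l where "l = s * fst x + F * snd x / s"
    define m where "m = W * snd x / s"
    have x: "x = psi s F W l m" unfolding l_def m_def by (rule psi_surj[OF sW])
    have "l^2 + m^2 = 1" using n pin[of l m] x by (simp add: norm_eq_1)
    moreover have "y = (l^2 + m^2) *\<^sub>R H0f s1 s2 s3 (s^2) F G + (l^2 - m^2) *\<^sub>R af s1 s2 s3 (s^2) F G
      + (2 * l * m) *\<^sub>R bf s1 s2 s3 (s^2) F G"
      unfolding y G_def using psi_sff[OF sW, of F l m s1 s2 s3] x by simp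
    moreover have "(l^2 - m^2)^2 + (2*l*m)^2 = (l^2+m^2)^2" by (simp add: algebra_simps power2_eq_square)
    ultimately show "y \<in> ?R" by auto
  qed
  show "?R \<subseteq> ?L"
  proof
    fix y assume "y \<in> ?R"
    then obtain c t where y: "y = H0f s1 s2 s3 (s^2) F G + c *\<^sub>R af s1 s2 s3 (s^2) F G + t *\<^sub>R bf s1 s2 s3 (s^2) F G"
      and ct: "c^2 + t^2 = 1" by blast
    obtain l m where lm: "l^2 + m^2 = 1" "l^2 - m^2 = c" "2 * l * m = t" using half_angle[OF ct] by blast
    define x where "x = psi s F W l m"
    have "norm (fst x *\<^sub>R u + snd x *\<^sub>R v) = 1" using pin[of l m] lm by (simp add: norm_eq_1 x_def)
    moreover have "y = (fst x * fst x) *\<^sub>R s1 + (fst x * snd x + snd x * fst x) *\<^sub>R s2 + (snd x * snd x) *\<^sub>R s3"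
      unfolding y x_def G_def psi_sff[OF sW, of F l m s1 s2 s3] using lm by simp
    ultimately show "y \<in> ?L" by blast
  qed
qed

lemma mean_eq:
  fixes u v s1 s2 s3 :: "real^4" and s W F :: real
  assumes sW: "s > 0" "W > 0"
    and inn: "\<And>x y. (fst x *\<^sub>R u + snd x *\<^sub>R v) \<bullet> (fst y *\<^sub>R u + snd y *\<^sub>R v)
       = s^2 * fst x * fst y + F * (fst x * snd y + snd x * fst y) + ((W^2 + F^2) / s^2) * snd x * snd y"
  defines "G \<equiv> (W^2 + F^2) / s^2"
  defines "SF \<equiv> \<lambda>x. (fst x * fst x) *\<^sub>R s1 + (fst x * snd x + snd x * fst x) *\<^sub>R s2 + (snd x * snd x) *\<^sub>R s3"
  defines "T \<equiv> \<lambda>x. fst x *\<^sub>R u + snd x *\<^sub>R v"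
  shows "(SOME h. \<exists>x y. norm (T x) = 1 \<and> norm (T y) = 1 \<and> T x \<bullet> T y = 0 \<and> h = (1/2) *\<^sub>R (SF x + SF y))
     = H0f s1 s2 s3 (s^2) F G"
proof -
  have pin: "T (psi s F W l m) \<bullet> T (psi s F W l' m') = l*l' + m*m'" for l m l' m'
    using inn psi_inner[OF sW, of F l m l' m'] by (simp add: T_def)
  have psf: "SF (psi s F W l m) = (l^2 + m^2) *\<^sub>R H0f s1 s2 s3 (s^2) F G + (l^2 - m^2) *\<^sub>R af s1 s2 s3 (s^2) F G
      + (2 * l * m) *\<^sub>R bf s1 s2 s3 (s^2) F G" for l m
    unfolding SF_def G_def by (rule psi_sff[OF sW])
  have key: "h = H0f s1 s2 s3 (s^2) F G"
    if hyp: "\<exists>x y. norm (T x) = 1 \<and> norm (T y) = 1 \<and> T x \<bullet> T y = 0 \<and> h = (1/2) *\<^sub>R (SF x + SF y)" for h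
  proof -
    obtain x y where n: "norm (T x) = 1" "norm (T y) = 1" "T x \<bullet> T y = 0" and h: "h = (1/2) *\<^sub>R (SF x + SF y)"
      using hyp by blast
    define l1 where "l1 = s * fst x + F * snd x / s"
    define m1 where "m1 = W * snd x / s"
    define l2 where "l2 = s * fst y + F * snd y / s"
    define m2 where "m2 = W * snd y / s"
    have x: "x = psi s F W l1 m1" unfolding l1_def m1_def by (rule psi_surj[OF sW])
    have y: "y = psi s F W l2 m2" unfolding l2_def m2_def by (rule psi_surj[OF sW])
    have a1: "l1^2 + m1^2 = 1" using n(1) pin[of l1 m1 l1 m1] x by (simp add: norm_eq_1 power2_eq_square)
    have a2: "l2^2 + m2^2 = 1" using n(2) pin[of l2 m2 l2 m2] y by (simp add: norm_eq_1 power2_eq_square)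
    have a3: "l1*l2 + m1*m2 = 0" using n(3) pin[of l1 m1 l2 m2] x y by simp
    note oc = orth_cols[OF a1 a2 a3]
    have "SF x + SF y = (l1^2 + m1^2 + (l2^2 + m2^2)) *\<^sub>R H0f s1 s2 s3 (s^2) F G
       + (l1^2 - m1^2 + (l2^2 - m2^2)) *\<^sub>R af s1 s2 s3 (s^2) F G + (2 * (l1 * m1 + l2 * m2)) *\<^sub>R bf s1 s2 s3 (s^2) F G"
      unfolding x y psf by (simp add: algebra_simps)
    then have "SF x + SF y = 2 *\<^sub>R H0f s1 s2 s3 (s^2) F G" using a1 a2 oc by simp
    then show ?thesis using h by simp
  qed
  have ex: "\<exists>x y. norm (T x) = 1 \<and> norm (T y) = 1 \<and> T x \<bullet> T y = 0 \<and> h = (1/2) *\<^sub>R (SF x + SF y)"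
    if "h = (1/2) *\<^sub>R (SF (psi s F W 1 0) + SF (psi s F W 0 1))" for h
    using that pin[of 1 0 1 0] pin[of 0 1 0 1] pin[of 1 0 0 1]
    by (intro exI[of _ "psi s F W 1 0"] exI[of _ "psi s F W 0 1"]) (simp add: norm_eq_1)
  let ?P = "\<lambda>h. \<exists>x y. norm (T x) = 1 \<and> norm (T y) = 1 \<and> T x \<bullet> T y = 0 \<and> h = (1/2) *\<^sub>R (SF x + SF y)"
  have "\<exists>h. ?P h" using ex by blast
  from someI_ex[OF this] show ?thesis by (rule key)
qed


definition cr :: "real^4 \<Rightarrow> real^4 \<Rightarrow> real^4 \<Rightarrow> real^4 \<Rightarrow> real" where
  "cr e1 e2 X Y = (X \<bullet> e1) * (Y \<bullet> e2) - (X \<bullet> e2) * (Y \<bullet> e1)"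


lemma cr_add_left: "cr e1 e2 (X + Y) Z = cr e1 e2 X Z + cr e1 e2 Y Z"
  unfolding cr_def by (simp add: inner_add_left algebra_simps)
lemma cr_diff_left: "cr e1 e2 (X - Y) Z = cr e1 e2 X Z - cr e1 e2 Y Z"
  unfolding cr_def by (simp add: inner_diff_left algebra_simps)
lemma cr_scale_left: "cr e1 e2 (k *\<^sub>R X) Z = k * cr e1 e2 X Z"
  unfolding cr_def by (simp add: algebra_simps)
lemma cr_add_right: "cr e1 e2 Z (X + Y) = cr e1 e2 Z X + cr e1 e2 Z Y"
  unfolding cr_def by (simp add: inner_add_left algebra_simps)
lemma cr_diff_right: "cr e1 e2 Z (X - Y) = cr e1 e2 Z X - cr e1 e2 Z Y"
  unfolding cr_def by (simp add: inner_diff_left algebra_simps)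
lemma cr_scale_right: "cr e1 e2 Z (k *\<^sub>R X) = k * cr e1 e2 Z X"
  unfolding cr_def by (simp add: algebra_simps)
lemma cr_self: "cr e1 e2 X X = 0"
  unfolding cr_def by simp
lemma cr_swap: "cr e1 e2 Y X = - cr e1 e2 X Y"
  unfolding cr_def by simp
lemmas cr_lin = cr_add_left cr_diff_left cr_scale_left cr_add_right cr_diff_right cr_scale_right cr_self


lemma cr_comb:
  "cr e1 e2 (k *\<^sub>R (a1 *\<^sub>R s1 + a2 *\<^sub>R s2 + a3 *\<^sub>R s3)) (k' *\<^sub>R (b1 *\<^sub>R s1 + b2 *\<^sub>R s2 + b3 *\<^sub>R s3))
   = k * k' * ((a1*b2 - a2*b1) * cr e1 e2 s1 s2 + (a1*b3 - a3*b1) * cr e1 e2 s1 s3 + (a2*b3 - a3*b2) * cr e1 e2 s2 s3)"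
  unfolding cr_lin cr_swap[of e1 e2 s2 s1] cr_swap[of e1 e2 s3 s1] cr_swap[of e1 e2 s3 s2]
  by (simp add: algebra_simps)

lemma H0f_form: "H0f s1 s2 s3 E F G = (1 / (2 * (E * G - F^2))) *\<^sub>R (G *\<^sub>R s1 + (- 2 * F) *\<^sub>R s2 + E *\<^sub>R s3)"
  unfolding H0f_def by (simp add: algebra_simps)
lemma af_form: "af s1 s2 s3 E F G = (1 / (2 * E * (E * G - F^2))) *\<^sub>R ((E * G - 2 * F^2) *\<^sub>R s1 + (2 * F * E) *\<^sub>R s2 + (- (E^2)) *\<^sub>R s3)"
  unfolding af_def by (simp add: algebra_simps)
lemma bf_form: "bf s1 s2 s3 E F G = (1 / (E * sqrt (E * G - F^2))) *\<^sub>R ((- F) *\<^sub>R s1 + E *\<^sub>R s2 + 0 *\<^sub>R s3)"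
  unfolding bf_def by (simp add: algebra_simps)

lemma cr_C1:
  assumes E: "E > 0" and D: "E * G - F^2 > 0"
  shows "cr e1 e2 (af s1 s2 s3 E F G) (bf s1 s2 s3 E F G)
    = (G * cr e1 e2 s1 s2 + E * cr e1 e2 s2 s3 - F * cr e1 e2 s1 s3) / (2 * (E * G - F^2) * sqrt (E * G - F^2))"
proof -
  have W: "sqrt (E * G - F^2) \<noteq> 0" using D by simp
  have D': "E * G - F^2 \<noteq> 0" using D by simp
  have E': "E \<noteq> 0" using E by simp
  obtain DD where DD: "E * G - F^2 = DD" "DD \<noteq> 0" using D' by blast
  show ?thesis unfolding af_form bf_form cr_comb
    unfolding DD(1) using W D' E' DD by (simp add: field_simps) (use DD(1) in algebra)
qed

lemma cr_C2:
  assumes E: "E > 0" and D: "E * G - F^2 > 0"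
  shows "cr e1 e2 (H0f s1 s2 s3 E F G) (af s1 s2 s3 E F G)
    = (2 * F * cr e1 e2 s1 s2 - E * cr e1 e2 s1 s3) / (2 * E * (E * G - F^2))"
proof -
  have D': "E * G - F^2 \<noteq> 0" using D by simp
  have E': "E \<noteq> 0" using E by simp
  obtain DD where DD: "E * G - F^2 = DD" "DD \<noteq> 0" using D' by blast
  show ?thesis unfolding af_form H0f_form cr_comb
    unfolding DD(1) using D' E' DD by (simp add: field_simps) (use DD(1) in algebra)
qed

lemma cr_C3:
  assumes E: "E > 0" and D: "E * G - F^2 > 0"
  shows "cr e1 e2 (H0f s1 s2 s3 E F G) (bf s1 s2 s3 E F G)
    = ((G * E - 2 * F^2) * cr e1 e2 s1 s2 - E^2 * cr e1 e2 s2 s3 + E * F * cr e1 e2 s1 s3) / (2 * (E * G - F^2) * E * sqrt (E * G - F^2))"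
proof -
  have W: "sqrt (E * G - F^2) \<noteq> 0" using D by simp
  have D': "E * G - F^2 \<noteq> 0" using D by simp
  have E': "E \<noteq> 0" using E by simp
  obtain DD where DD: "E * G - F^2 = DD" "DD \<noteq> 0" using D' by blast
  show ?thesis unfolding bf_form H0f_form cr_comb
    unfolding DD(1) using W D' E' DD by (simp add: field_simps) (simp add: algebra_simps power2_eq_square)
qed


definition inS :: "real^4 \<Rightarrow> real^4 \<Rightarrow> real^4 \<Rightarrow> bool" where
  "inS e1 e2 X \<longleftrightarrow> X = (X \<bullet> e1) *\<^sub>R e1 + (X \<bullet> e2) *\<^sub>R e2"

lemma inS_add: assumes "inS e1 e2 X" "inS e1 e2 Y" shows "inS e1 e2 (X + Y)"
proof -
  have "((X + Y) \<bullet> e1) *\<^sub>R e1 + ((X + Y) \<bullet> e2) *\<^sub>R e2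
     = ((X \<bullet> e1) *\<^sub>R e1 + (X \<bullet> e2) *\<^sub>R e2) + ((Y \<bullet> e1) *\<^sub>R e1 + (Y \<bullet> e2) *\<^sub>R e2)"
    by (simp add: inner_add_left algebra_simps)
  also have "\<dots> = X + Y" using assms[unfolded inS_def, symmetric] by (simp only:)
  finally show ?thesis unfolding inS_def by simp
qed
lemma inS_diff: assumes "inS e1 e2 X" "inS e1 e2 Y" shows "inS e1 e2 (X - Y)"
proof -
  have "((X - Y) \<bullet> e1) *\<^sub>R e1 + ((X - Y) \<bullet> e2) *\<^sub>R e2
     = ((X \<bullet> e1) *\<^sub>R e1 + (X \<bullet> e2) *\<^sub>R e2) - ((Y \<bullet> e1) *\<^sub>R e1 + (Y \<bullet> e2) *\<^sub>R e2)"
    by (simp add: inner_diff_left algebra_simps)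
  also have "\<dots> = X - Y" using assms[unfolded inS_def, symmetric] by (simp only:)
  finally show ?thesis unfolding inS_def by simp
qed
lemma inS_scale: assumes "inS e1 e2 X" shows "inS e1 e2 (k *\<^sub>R X)"
proof -
  have "((k *\<^sub>R X) \<bullet> e1) *\<^sub>R e1 + ((k *\<^sub>R X) \<bullet> e2) *\<^sub>R e2
     = k *\<^sub>R ((X \<bullet> e1) *\<^sub>R e1 + (X \<bullet> e2) *\<^sub>R e2)"
    by (simp add: algebra_simps)
  also have "\<dots> = k *\<^sub>R X" using assms[unfolded inS_def, symmetric] by (simp only:)
  finally show ?thesis unfolding inS_def by simp
qed

lemma inS_zero_iff: "inS e1 e2 X \<Longrightarrow> X \<noteq> 0 \<Longrightarrow> X \<bullet> e1 \<noteq> 0 \<or> X \<bullet> e2 \<noteq> 0"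
  unfolding inS_def by auto

lemma par:
  assumes X: "inS e1 e2 X" and Y: "inS e1 e2 Y" and Y0: "Y \<noteq> 0" and c: "cr e1 e2 X Y = 0"
  shows "\<exists>k. X = k *\<^sub>R Y"
proof -
  have c': "(X \<bullet> e1) * (Y \<bullet> e2) = (X \<bullet> e2) * (Y \<bullet> e1)" using c unfolding cr_def by simp
  consider "Y \<bullet> e1 \<noteq> 0" | "Y \<bullet> e2 \<noteq> 0" using inS_zero_iff[OF Y Y0] by blast
  then show ?thesis
  proof cases
    case 1
    define k where "k = (X \<bullet> e1) / (Y \<bullet> e1)"
    have k1: "X \<bullet> e1 = k * (Y \<bullet> e1)" using 1 by (simp add: k_def)
    have k2: "X \<bullet> e2 = k * (Y \<bullet> e2)" using 1 c' by (simp add: k_def field_simps)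
    have "X = (X \<bullet> e1) *\<^sub>R e1 + (X \<bullet> e2) *\<^sub>R e2" using X unfolding inS_def .
    also have "\<dots> = (k * (Y \<bullet> e1)) *\<^sub>R e1 + (k * (Y \<bullet> e2)) *\<^sub>R e2" by (simp only: k1 k2)
    also have "\<dots> = k *\<^sub>R ((Y \<bullet> e1) *\<^sub>R e1 + (Y \<bullet> e2) *\<^sub>R e2)" by (simp add: algebra_simps)
    also have "(Y \<bullet> e1) *\<^sub>R e1 + (Y \<bullet> e2) *\<^sub>R e2 = Y" using Y unfolding inS_def by simp
    finally show ?thesis by blast
  next
    case 2
    define k where "k = (X \<bullet> e2) / (Y \<bullet> e2)"
    have k2: "X \<bullet> e2 = k * (Y \<bullet> e2)" using 2 by (simp add: k_def)
    have k1: "X \<bullet> e1 = k * (Y \<bullet> e1)" using 2 c' by (simp add: k_def field_simps)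
    have "X = (X \<bullet> e1) *\<^sub>R e1 + (X \<bullet> e2) *\<^sub>R e2" using X unfolding inS_def .
    also have "\<dots> = (k * (Y \<bullet> e1)) *\<^sub>R e1 + (k * (Y \<bullet> e2)) *\<^sub>R e2" by (simp only: k1 k2)
    also have "\<dots> = k *\<^sub>R ((Y \<bullet> e1) *\<^sub>R e1 + (Y \<bullet> e2) *\<^sub>R e2)" by (simp add: algebra_simps)
    also have "(Y \<bullet> e1) *\<^sub>R e1 + (Y \<bullet> e2) *\<^sub>R e2 = Y" using Y unfolding inS_def by simp
    finally show ?thesis by blast
  qed
qed

lemma inS_nproj:
  assumes "e1 \<bullet> e1 = 1" "e2 \<bullet> e2 = 1" "e1 \<bullet> e2 = 0"
  shows "inS e1 e2 ((w \<bullet> e1) *\<^sub>R e1 + (w \<bullet> e2) *\<^sub>R e2)"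
  using assms unfolding inS_def by (simp add: inner_add_left inner_commute[of e2 e1])


lemma seg_iff:
  fixes s1 s2 s3 e1 e2 :: "real^4" and E F G :: real
  assumes E: "E > 0" and D: "E * G - F^2 > 0"
    and S1: "inS e1 e2 s1" and S2: "inS e1 e2 s2" and S3: "inS e1 e2 s3"
  defines "H \<equiv> H0f s1 s2 s3 E F G" and "a \<equiv> af s1 s2 s3 E F G" and "b \<equiv> bf s1 s2 s3 E F G"
    and "PQ \<equiv> cr e1 e2 s1 s2" and "PR \<equiv> cr e1 e2 s1 s3" and "QR \<equiv> cr e1 e2 s2 s3"
  shows "(\<exists>A B. A \<noteq> B \<and> {H + c *\<^sub>R a + t *\<^sub>R b | c t. c^2 + t^2 = 1} = closed_segment A B \<and>
            \<not> (\<exists>k. H = k *\<^sub>R (B - A)))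
    \<longleftrightarrow> (G * PQ + E * QR - F * PR = 0 \<and> (PQ \<noteq> 0 \<or> PR \<noteq> 0))"
    (is "?L \<longleftrightarrow> ?R")
proof -
  let ?Ell = "{H + c *\<^sub>R a + t *\<^sub>R b | c t. c^2 + t^2 = 1}"
  have W: "sqrt (E * G - F^2) > 0" using D by simp
  have cab: "cr e1 e2 a b = (G * PQ + E * QR - F * PR) / (2 * (E * G - F^2) * sqrt (E * G - F^2))"
    unfolding a_def b_def PQ_def PR_def QR_def by (rule cr_C1[OF E D])
  have cHa: "cr e1 e2 H a = (2 * F * PQ - E * PR) / (2 * E * (E * G - F^2))"
    unfolding a_def H_def PQ_def PR_def QR_def by (rule cr_C2[OF E D])
  have cHb: "cr e1 e2 H b = ((G * E - 2 * F^2) * PQ - E^2 * QR + E * F * PR) / (2 * (E * G - F^2) * E * sqrt (E * G - F^2))"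
    unfolding b_def H_def PQ_def PR_def QR_def by (rule cr_C3[OF E D])
  have cHbK: "cr e1 e2 H b = PQ / (E * sqrt (E * G - F^2))" if K: "G * PQ + E * QR - F * PR = 0"
  proof -
    have "E * QR = F * PR - G * PQ" using K by simp
    then have "E^2 * QR = E * (F * PR - G * PQ)" by (metis power2_eq_square mult.assoc)
    then have "(G * E - 2 * F^2) * PQ - E^2 * QR + E * F * PR = 2 * (E * G - F^2) * PQ"
      by (simp add: algebra_simps)
    then show ?thesis unfolding cHb using E D W by (simp add: field_simps)
  qed
  have SH: "inS e1 e2 H" unfolding H_def H0f_def by (intro inS_scale inS_add inS_diff S1 S2 S3)
  have Sa: "inS e1 e2 a" unfolding a_def af_def by (intro inS_scale inS_add inS_diff S1 S2 S3)
  have Sb: "inS e1 e2 b" unfolding b_def bf_def by (intro inS_scale inS_add inS_diff S1 S2 S3)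
  have SEll: "inS e1 e2 X" if "X \<in> ?Ell" for X
    using that SH Sa Sb by (auto intro!: inS_add inS_scale)
  have cr_sc: "cr e1 e2 X (k *\<^sub>R Y) = k * cr e1 e2 X Y" "cr e1 e2 (k *\<^sub>R Y) X = k * cr e1 e2 Y X" for X Y k
    by (simp_all add: cr_scale_left cr_scale_right)
  show ?thesis
  proof
    assume ?L
    then obtain A B where AB: "A \<noteq> B" and eq: "?Ell = closed_segment A B" and nc: "\<not> (\<exists>k. H = k *\<^sub>R (B - A))"
      by blast
    define d where "d = B - A"
    have d0: "d \<noteq> 0" using AB by (simp add: d_def)
    have onseg: "\<exists>u. X = A + u *\<^sub>R d" if "X \<in> ?Ell" for X
    proof -
      from that eq obtain u where "X = (1 - u) *\<^sub>R A + u *\<^sub>R B" unfolding closed_segment_def by auto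
      then have "X = A + u *\<^sub>R d" by (simp add: d_def algebra_simps)
      then show ?thesis by blast
    qed
    have m1: "H + a \<in> ?Ell" by (rule CollectI, rule exI[of _ 1], rule exI[of _ 0]) simp
    have m2: "H - a \<in> ?Ell" by (rule CollectI, rule exI[of _ "-1"], rule exI[of _ 0]) simp
    have m3: "H + b \<in> ?Ell" by (rule CollectI, rule exI[of _ 0], rule exI[of _ 1]) simp
    have m4: "H - b \<in> ?Ell" by (rule CollectI, rule exI[of _ 0], rule exI[of _ "-1"]) simp
    obtain u1 u2 u3 u4 where u: "H + a = A + u1 *\<^sub>R d" "H - a = A + u2 *\<^sub>R d" "H + b = A + u3 *\<^sub>R d" "H - b = A + u4 *\<^sub>R d"
      using onseg[OF m1] onseg[OF m2] onseg[OF m3] onseg[OF m4] by blast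
    have half: "X = ((1::real)/2) *\<^sub>R ((H + X) - (H - X))" for X :: "real^4"
      by (simp add: scaleR_2[symmetric] del: scaleR_2)
    have ad: "a = ((u1 - u2)/2) *\<^sub>R d"
      by (subst half, unfold u(1,2)) (simp add: scaleR_diff_left[symmetric])
    have bd: "b = ((u3 - u4)/2) *\<^sub>R d"
      by (subst half, unfold u(3,4)) (simp add: scaleR_diff_left[symmetric])
    have "cr e1 e2 a b = 0" unfolding ad bd by (simp add: cr_sc cr_self)
    then have K: "G * PQ + E * QR - F * PR = 0" using cab D W by simp
    have "PQ \<noteq> 0 \<or> PR \<noteq> 0"
    proof (rule ccontr)
      assume "\<not> (PQ \<noteq> 0 \<or> PR \<noteq> 0)"
      then have z: "PQ = 0" "PR = 0" by auto
      have ha: "cr e1 e2 H a = 0" using cHa z by simp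
      have hb: "cr e1 e2 H b = 0" using cHbK[OF K] z by simp
      have AE: "A \<in> ?Ell" "B \<in> ?Ell" using eq by auto
      have Sd: "inS e1 e2 d" unfolding d_def using SEll[OF AE(1)] SEll[OF AE(2)] by (rule inS_diff[rotated])
      show False
      proof (cases "u1 - u2 = 0 \<and> u3 - u4 = 0")
        case True
        then have a0: "a = 0" and b0: "b = 0" using ad bd by auto
        have "?Ell = {H}"
        proof (intro equalityI subsetI)
          fix X assume "X \<in> ?Ell" then show "X \<in> {H}" using a0 b0 by auto
        next
          fix X assume "X \<in> {H}"
          then have "X = H + (1::real) *\<^sub>R a + (0::real) *\<^sub>R b \<and> (1::real)^2 + (0::real)^2 = 1" using a0 b0 by simp
          then show "X \<in> ?Ell" by blast
        qed
        then show False using eq AB by (metis closed_segment_eq_sing)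
      next
        case False
        then have "cr e1 e2 H d = 0" using ha hb unfolding ad bd cr_sc by auto
        then obtain k where "H = k *\<^sub>R d" using par[OF SH Sd d0] by blast
        then show False using nc d_def by blast
      qed
    qed
    then show ?R using K by blast
  next
    assume R: ?R
    then have K: "G * PQ + E * QR - F * PR = 0" by blast
    have cab0: "cr e1 e2 a b = 0" using cab K by simp
    obtain w \<alpha> \<beta> where w: "a = \<alpha> *\<^sub>R w" "b = \<beta> *\<^sub>R w" "cr e1 e2 H w \<noteq> 0" "\<alpha>^2 + \<beta>^2 > 0"
    proof (cases "PQ \<noteq> 0")
      case True
      then have h: "cr e1 e2 H b \<noteq> 0" using cHbK[OF K] E W by simp
      then have "b \<noteq> 0" by (auto simp: cr_def)
      then obtain k where "a = k *\<^sub>R b" using par[OF Sa Sb _ cab0] by blast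
      moreover have "0 < k^2 + (1::real)" by (simp add: add_nonneg_pos)
      ultimately show ?thesis using that[of k b 1] h by simp
    next
      case False
      then have "PR \<noteq> 0" using R by blast
      then have h: "cr e1 e2 H a \<noteq> 0" using cHa False E D by simp
      then have "a \<noteq> 0" by (auto simp: cr_def)
      moreover have "cr e1 e2 b a = 0" using cab0 cr_swap[of e1 e2 b a] by simp
      ultimately obtain k where "b = k *\<^sub>R a" using par[OF Sb Sa] by blast
      moreover have "0 < (1::real) + k^2" by (simp add: add_pos_nonneg)
      ultimately show ?thesis using that[of 1 a k] h by simp
    qed
    define \<rho> where "\<rho> = sqrt (\<alpha>^2 + \<beta>^2)"
    have \<rho>: "\<rho> > 0" "\<rho>^2 = \<alpha>^2 + \<beta>^2" using w(4) by (simp_all add: \<rho>_def)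
    have w0: "w \<noteq> 0" using w(3) by (auto simp: cr_def)
    define A where "A = H - \<rho> *\<^sub>R w"
    define B where "B = H + \<rho> *\<^sub>R w"
    have BA: "B - A = (2 * \<rho>) *\<^sub>R w" by (simp add: A_def B_def vec_eq_iff algebra_simps)
    have AB: "A \<noteq> B" using BA \<rho> w0 by (metis mult_eq_0_iff right_minus_eq scaleR_eq_0_iff zero_neq_numeral order_less_irrefl)
    have ptw: "H + c *\<^sub>R a + t *\<^sub>R b = H + (c * \<alpha> + t * \<beta>) *\<^sub>R w" for c t
      unfolding w(1,2) by (simp add: vec_eq_iff algebra_simps)
    have Ell_w: "?Ell = {H + (c * \<alpha> + t * \<beta>) *\<^sub>R w | c t. c^2 + t^2 = 1}"
      unfolding ptw ..
    have pts: "(1 - u) *\<^sub>R A + u *\<^sub>R B = H + ((2 * u - 1) * \<rho>) *\<^sub>R w" for u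
      unfolding A_def B_def by (simp add: vec_eq_iff algebra_simps)
    have seg: "closed_segment A B = {H + ((2 * u - 1) * \<rho>) *\<^sub>R w | u. 0 \<le> u \<and> u \<le> 1}"
      unfolding closed_segment_def pts ..
    have "?Ell = closed_segment A B"
      unfolding Ell_w seg
    proof (intro equalityI subsetI)
      fix X assume "X \<in> {H + (c * \<alpha> + t * \<beta>) *\<^sub>R w | c t. c^2 + t^2 = 1}"
      then obtain c t where X: "X = H + (c * \<alpha> + t * \<beta>) *\<^sub>R w" and ct: "c^2 + t^2 = 1" by blast
      define \<sigma> where "\<sigma> = c * \<alpha> + t * \<beta>"
      have "\<sigma>^2 \<le> \<rho>^2"
      proof -
        have "(c^2 + t^2) * (\<alpha>^2 + \<beta>^2) - \<sigma>^2 = (c * \<beta> - t * \<alpha>)^2"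
          by (simp add: \<sigma>_def algebra_simps power2_eq_square)
        then show ?thesis using ct \<rho> by (metis diff_ge_0_iff_ge mult_1 zero_le_power2)
      qed
      then have sr: "\<bar>\<sigma>\<bar> \<le> \<rho>" using \<rho> by (metis abs_le_square_iff abs_of_pos)
      define u where "u = (\<sigma> / \<rho> + 1) / 2"
      have "0 \<le> u" "u \<le> 1" using sr \<rho> by (auto simp: u_def field_simps abs_le_iff)
      moreover have "(2 * u - 1) * \<rho> = \<sigma>" using \<rho> by (simp add: u_def field_simps)
      ultimately show "X \<in> {H + ((2 * u - 1) * \<rho>) *\<^sub>R w | u. 0 \<le> u \<and> u \<le> 1}"
        unfolding X \<sigma>_def[symmetric] by (metis (mono_tags, lifting) mem_Collect_eq)
    next
      fix X assume "X \<in> {H + ((2 * u - 1) * \<rho>) *\<^sub>R w | u. 0 \<le> u \<and> u \<le> 1}"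
      then obtain u where X: "X = H + ((2 * u - 1) * \<rho>) *\<^sub>R w" and u: "0 \<le> u" "u \<le> 1" by blast
      define \<sigma> where "\<sigma> = (2 * u - 1) * \<rho>"
      have "\<bar>2 * u - 1\<bar> \<le> 1" using u by auto
      then have "\<bar>2 * u - 1\<bar>^2 \<le> 1^2" by (intro power_mono) auto
      then have q: "(2 * u - 1)^2 \<le> 1" by simp
      have "\<sigma>^2 = (2 * u - 1)^2 * \<rho>^2" by (simp add: \<sigma>_def power_mult_distrib)
      also have "\<dots> \<le> 1 * \<rho>^2" by (rule mult_right_mono[OF q]) simp
      finally have "\<sigma>^2 \<le> \<rho>^2" by simp
      then have st: "\<rho>^2 - \<sigma>^2 \<ge> 0" by simp
      define \<tau> where "\<tau> = sqrt (\<rho>^2 - \<sigma>^2)"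
      have \<tau>2: "\<tau>^2 = \<rho>^2 - \<sigma>^2" using st by (simp add: \<tau>_def)
      define c where "c = (\<sigma> * \<alpha> - \<tau> * \<beta>) / \<rho>^2"
      define t where "t = (\<sigma> * \<beta> + \<tau> * \<alpha>) / \<rho>^2"
      have "c^2 + t^2 = (\<sigma>^2 + \<tau>^2) * (\<alpha>^2 + \<beta>^2) / (\<rho>^2)^2"
        using \<rho>(1) by (simp add: c_def t_def field_simps power2_eq_square)
      also have "(\<sigma>^2 + \<tau>^2) * (\<alpha>^2 + \<beta>^2) = (\<rho>^2)^2" using \<tau>2 \<rho>(2) by (simp add: power2_eq_square)
      also have "(\<rho>^2)^2 / (\<rho>^2)^2 = 1" using \<rho>(1) by simp
      finally have ct: "c^2 + t^2 = 1" .
      have "c * \<alpha> + t * \<beta> = \<sigma> * (\<alpha>^2 + \<beta>^2) / \<rho>^2"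
        using \<rho>(1) by (simp add: c_def t_def field_simps power2_eq_square)
      also have "\<dots> = \<sigma>" using \<rho> by (simp flip: \<rho>(2))
      finally have "c * \<alpha> + t * \<beta> = \<sigma>" .
      then have "X = H + (c * \<alpha> + t * \<beta>) *\<^sub>R w" using X \<sigma>_def by simp
      then show "X \<in> {H + (c * \<alpha> + t * \<beta>) *\<^sub>R w | c t. c^2 + t^2 = 1}"
        using ct by blast
    qed
    moreover have "\<not> (\<exists>k. H = k *\<^sub>R (B - A))"
    proof
      assume "\<exists>k. H = k *\<^sub>R (B - A)"
      then obtain k where "H = (k * (2 * \<rho>)) *\<^sub>R w" unfolding BA by auto
      then have "cr e1 e2 H w = 0" by (simp add: cr_sc cr_self)
      then show False using w(3) by simp
    qed
    ultimately show ?L using AB by blast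
  qed
qed


lemma hyp_iff:
  fixes E F G PQ PR QR :: real
  assumes E: "E > 0" and D: "E * G - F^2 > 0"
  defines "W \<equiv> sqrt (E * G - F^2)"
  defines "L \<equiv> 2 / W * PQ" and "M \<equiv> 1 / W * PR" and "N \<equiv> 2 / W * QR"
  shows "(\<exists>nu1 nu2. (\<forall>x. (E * G - F^2) * x^2 - (E * N + G * L - 2 * F * M) * x + (L * N - M^2)
            = (E * G - F^2) * (x - nu1) * (x - nu2)) \<and> nu2 = - nu1 \<and> nu1 \<noteq> 0)
     \<longleftrightarrow> (G * PQ + E * QR - F * PR = 0 \<and> (PQ \<noteq> 0 \<or> PR \<noteq> 0))"
    (is "?L \<longleftrightarrow> ?R")
proof -
  define \<Delta> where "\<Delta> = E * G - F^2"
  have W: "W > 0" "W^2 = \<Delta>" using D by (simp_all add: W_def \<Delta>_def)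
  have Tr: "E * N + G * L - 2 * F * M = 2 / W * (G * PQ + E * QR - F * PR)"
    unfolding L_def M_def N_def using W(1) by (simp add: field_simps)
  have Dt: "L * N - M^2 = (4 * PQ * QR - PR^2) / \<Delta>"
    unfolding L_def M_def N_def using W D by (simp add: field_simps power2_eq_square \<Delta>_def)
  have \<Delta>: "\<Delta> > 0" using D by (simp add: \<Delta>_def)
  show ?thesis
  proof
    assume ?L
    then obtain nu1 where h: "\<And>x. \<Delta> * x^2 - (E * N + G * L - 2 * F * M) * x + (L * N - M^2)
            = \<Delta> * (x - nu1) * (x + nu1)" and n0: "nu1 \<noteq> 0"
      unfolding \<Delta>_def by auto
    have h0: "L * N - M^2 = - \<Delta> * nu1^2" using h[of 0] by (simp add: power2_eq_square)
    have h1: "\<Delta> - (E * N + G * L - 2 * F * M) + (L * N - M^2) = \<Delta> - \<Delta> * nu1^2"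
      using h[of 1] by (simp add: algebra_simps power2_eq_square)
    have "E * N + G * L - 2 * F * M = 0" using h0 h1 by simp
    then have K: "G * PQ + E * QR - F * PR = 0" using Tr W by simp
    have neg: "L * N - M^2 < 0" using h0 \<Delta> n0 by simp
    have "PQ \<noteq> 0 \<or> PR \<noteq> 0"
    proof (rule ccontr)
      assume "\<not> (PQ \<noteq> 0 \<or> PR \<noteq> 0)"
      then have "L * N - M^2 = 0" unfolding Dt by simp
      then show False using neg by simp
    qed
    then show ?R using K by blast
  next
    assume R: ?R
    then have K: "G * PQ + E * QR - F * PR = 0" by blast
    have T0: "E * N + G * L - 2 * F * M = 0" using Tr K by simp
    have EQ: "E * QR = F * PR - G * PQ" using K by simp
    have iden: "E * (E * (4 * PQ * QR - PR^2)) = - ((2 * F * PQ - E * PR)^2 + 4 * \<Delta> * PQ^2)"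
    proof -
      have "E * (E * (4 * PQ * QR - PR^2)) = E * (4 * PQ * (E * QR) - E * PR^2)" by (simp add: algebra_simps)
      also have "\<dots> = E * (4 * PQ * (F * PR - G * PQ) - E * PR^2)" by (simp only: EQ)
      also have "\<dots> = - ((2 * F * PQ - E * PR)^2 + 4 * \<Delta> * PQ^2)"
        by (simp add: \<Delta>_def algebra_simps power2_eq_square)
      finally show ?thesis .
    qed
    have pos: "(2 * F * PQ - E * PR)^2 + 4 * \<Delta> * PQ^2 > 0"
    proof (cases "PQ = 0")
      case True
      then have "PR \<noteq> 0" using R by blast
      then show ?thesis using True E by simp
    next
      case False
      then have "4 * \<Delta> * PQ^2 > 0" using \<Delta> by simp
      then show ?thesis by (smt (verit) zero_le_power2)
    qed
    have "E * (E * (4 * PQ * QR - PR^2)) < 0" using iden pos by simp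
    then have num: "4 * PQ * QR - PR^2 < 0" using E by (simp add: mult_less_0_iff)
    define dt where "dt = L * N - M^2"
    have dt: "dt < 0" unfolding dt_def Dt using num \<Delta> by (simp add: divide_neg_pos)
    define nu where "nu = sqrt (- dt / \<Delta>)"
    have "- dt / \<Delta> > 0" using dt \<Delta> by (simp add: divide_neg_pos)
    then have nu2: "nu^2 = - dt / \<Delta>" by (simp add: nu_def)
    have nu0: "nu \<noteq> 0" using dt \<Delta> by (simp add: nu_def)
    have "\<forall>x. (E * G - F^2) * x^2 - (E * N + G * L - 2 * F * M) * x + (L * N - M^2)
            = (E * G - F^2) * (x - nu) * (x - - nu)"
    proof
      fix x
      have "\<Delta> * (x - nu) * (x - - nu) = \<Delta> * x^2 - \<Delta> * nu^2" by (simp add: algebra_simps power2_eq_square)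
      also have "\<Delta> * nu^2 = - dt" using nu2 \<Delta> by simp
      finally show "(E * G - F^2) * x^2 - (E * N + G * L - 2 * F * M) * x + (L * N - M^2)
            = (E * G - F^2) * (x - nu) * (x - - nu)" using T0 by (simp add: \<Delta>_def dt_def)
    qed
    then show ?L using nu0 by blast
  qed
qed


lemma gram_pos:
  fixes u v :: "real^4"
  assumes ind: "independent {u, v}" and uv: "u \<noteq> v"
  shows "u \<bullet> u > 0" "(u \<bullet> u) * (v \<bullet> v) - (u \<bullet> v)^2 > 0"
proof -
  have "independent (insert u {v})" using ind by simp
  then have nus: "u \<notin> span {v}" and iv: "independent {v}" using uv by (auto simp: independent_insert)
  have v0: "v \<noteq> 0" using iv by (auto simp: independent_insert)
  have u0: "u \<noteq> 0" using nus span_zero by blast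
  show "u \<bullet> u > 0" using u0 by simp
  have G: "v \<bullet> v > 0" using v0 by simp
  define w where "w = u - ((u \<bullet> v) / (v \<bullet> v)) *\<^sub>R v"
  have "w \<noteq> 0"
  proof
    assume "w = 0"
    then have "u = ((u \<bullet> v) / (v \<bullet> v)) *\<^sub>R v" by (simp add: w_def)
    then have "u \<in> span {v}" by (metis span_base span_scale singletonI)
    then show False using nus by blast
  qed
  then have wp: "w \<bullet> w > 0" by simp
  have "w \<bullet> w = (u \<bullet> u) - (u \<bullet> v)^2 / (v \<bullet> v)"
    unfolding w_def using G
    by (simp add: inner_diff_left inner_diff_right inner_commute[of v u] field_simps power2_eq_square)
  then have "(u \<bullet> u) * (v \<bullet> v) - (u \<bullet> v)^2 = (v \<bullet> v) * (w \<bullet> w)"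
    using G by (simp add: field_simps)
  then show "(u \<bullet> u) * (v \<bullet> v) - (u \<bullet> v)^2 > 0" using G wp by simp
qed

lemma pointwise:
  assumes reg: "regular_surface z U" and pU: "p \<in> U"
  shows "indicatrix_rect_hyperbola z p \<longleftrightarrow> ellipse_segment_not_collinear_H z p"
proof -
  define u where "u = zu z p"
  define v where "v = zv z p"
  have ind: "independent {u, v}" "u \<noteq> v" using reg pU by (simp_all add: regular_surface_def u_def v_def)
  note gp = gram_pos[OF ind]
  define E where "E = u \<bullet> u"
  define F where "F = u \<bullet> v"
  define G where "G = v \<bullet> v"
  have E: "E > 0" and D: "E * G - F^2 > 0" using gp by (simp_all add: E_def F_def G_def)
  have cE: "coefE z p = E" "coefF z p = F" "coefG z p = G" "coefW z p = sqrt (E * G - F^2)"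
    by (simp_all add: coefE_def coefF_def coefG_def coefW_def E_def F_def G_def u_def v_def)
  have "\<exists>f. pos_normal_frame z p (fst f) (snd f)"
    using frame_exists[OF gp(2)] unfolding pos_normal_frame_def u_def v_def by auto
  then have fr: "pos_normal_frame z p (ne1 z p) (ne2 z p)"
    unfolding ne1_def ne2_def nframe_def by (rule someI_ex)
  define e1 where "e1 = ne1 z p"
  define e2 where "e2 = ne2 z p"
  have orth: "e1 \<bullet> e1 = 1" "e2 \<bullet> e2 = 1" "e1 \<bullet> e2 = 0"
    using fr unfolding pos_normal_frame_def e1_def e2_def by (simp_all add: norm_eq_1)
  define s1 where "s1 = sig11 z p"
  define s2 where "s2 = sig12 z p"
  define s3 where "s3 = sig22 z p"
  have S: "inS e1 e2 s1" "inS e1 e2 s2" "inS e1 e2 s3"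
    unfolding s1_def s2_def s3_def sig11_def sig12_def sig22_def nproj_def e1_def[symmetric] e2_def[symmetric]
    using inS_nproj[OF orth] by blast+
  have cL: "coefL z p = 2 / sqrt (E * G - F^2) * cr e1 e2 s1 s2"
    and cM: "coefM z p = 1 / sqrt (E * G - F^2) * cr e1 e2 s1 s3"
    and cN: "coefN z p = 2 / sqrt (E * G - F^2) * cr e1 e2 s2 s3"
    unfolding coefL_def coefM_def coefN_def cE cc_def cr_def s1_def s2_def s3_def e1_def e2_def
    by (simp_all add: Let_def)
  have hyp: "indicatrix_rect_hyperbola z p \<longleftrightarrow>
     (G * cr e1 e2 s1 s2 + E * cr e1 e2 s2 s3 - F * cr e1 e2 s1 s3 = 0 \<and> (cr e1 e2 s1 s2 \<noteq> 0 \<or> cr e1 e2 s1 s3 \<noteq> 0))"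
    unfolding indicatrix_rect_hyperbola_def principal_normal_curvatures_def cE cL cM cN
    by (rule hyp_iff[OF E D])
  define s where "s = sqrt (u \<bullet> u)"
  define W where "W = sqrt ((u \<bullet> u) * (v \<bullet> v) - (u \<bullet> v)^2)"
  note ts = tangent_setup[OF gp, folded s_def W_def]
  have sE: "E = s^2" and sG: "G = (W^2 + F^2) / s^2" using ts(3,4) by (simp_all add: E_def F_def G_def)
  have ell: "normal_ellipse z p = {H0f s1 s2 s3 E F G + c *\<^sub>R af s1 s2 s3 E F G + t *\<^sub>R bf s1 s2 s3 E F G | c t. c^2 + t^2 = 1}"
    unfolding normal_ellipse_def sff_def tvec_def sE sG
    using ell_set[OF ts(1,2), of u v F s1 s2 s3] ts(5)
    unfolding u_def[symmetric] v_def[symmetric] s1_def[symmetric] s2_def[symmetric] s3_def[symmetric] F_def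
    by simp
  have mc: "mean_curv z p = H0f s1 s2 s3 E F G"
    unfolding mean_curv_def sff_def tvec_def sE sG
    using mean_eq[OF ts(1,2), of u v F s1 s2 s3] ts(5)
    unfolding u_def[symmetric] v_def[symmetric] s1_def[symmetric] s2_def[symmetric] s3_def[symmetric] F_def
    by simp
  have seg: "ellipse_segment_not_collinear_H z p \<longleftrightarrow>
     (G * cr e1 e2 s1 s2 + E * cr e1 e2 s2 s3 - F * cr e1 e2 s1 s3 = 0 \<and> (cr e1 e2 s1 s2 \<noteq> 0 \<or> cr e1 e2 s1 s3 \<noteq> 0))"
    unfolding ellipse_segment_not_collinear_H_def ell mc
    by (rule seg_iff[OF E D S])
  show ?thesis using hyp seg by simp
qed

theorem corollary3p6:
  fixes z :: "real^2 \<Rightarrow> real^4" and U :: "(real^2) set"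
  assumes "regular_surface z U"
    and "\<forall>p\<in>U. \<not> flat_point z p"
  shows "(\<forall>p\<in>U. indicatrix_rect_hyperbola z p) \<longleftrightarrow>
         (\<forall>p\<in>U. ellipse_segment_not_collinear_H z p)"
  using pointwise[OF assms(1)] by blast

end
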